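(* Let $G\leq \mathrm{Aut}(X^* )$ and $H\le G$. If there is $v\in X^*$ such that $\psi_v(H)$ is finite, then there is a countable independent family $(Y_i)_{i\in\mathbb{N}}$ of $H$-invariant leaf sets such that $\psi_v(H)$ is finite for all $v\in Y_i$ and all $i\in\mathbb{N}$. Furthermore, for any $M\in\mathbb{N}$ the family may be chosen so that $|x|\ge M$ for every $x\in Y_i$ and every $i\in\mathbb{N}$.
   Context: $X^*$ is the free monoid on a finite set $X$, viewed as a rooted tree; $|x|$ is the length of $x$; $\mathrm{Aut}(X^* )$ is the group of prefix-preserving bijections of $X^*$. For $g\in\mathrm{Aut}(X^* )$ and $u\in X^*$ the section $g_u$ is defined by $g(uw)=g(u)g_u(w)$ for all $w$, and $\psi_u(H)=\{h_u:h\in H\}$. A leaf set is a finite subset $Y\subseteq X^*$ such that no element of $Y$ is a prefix of a different element of $Y$; it is $H$-invariant if $h(Y)=Y$ for all $h\in H$. A family $(Y_i)_{i\in I}$ of leaf sets is independent if $\bigcup_{f\in F}Y_f$ is a leaf set for every finite $F\subseteq I$. *)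

theory Defs
  imports "HOL-Library.Sublist"
begin

text \<open>An automorphism of the tree X*
  is a bijection of lists X that preserves the prefix relation in both directions;
  we normalise it to be the identity outside lists X so that it is determined by
  its action on the tree.\<close>

definition tree_aut :: "'a set \<Rightarrow> ('a list \<Rightarrow> 'a list) \<Rightarrow> bool" where
  "tree_aut X g \<longleftrightarrow> bij_betw g (lists X) (lists X)
     \<and> (\<forall>u\<in>lists X. \<forall>w\<in>lists X. prefix u w \<longleftrightarrow> prefix (g u) (g w))
     \<and> (\<forall>w. w \<notin> lists X \<longrightarrow> g w = w)"

definition aut_subgroup :: "'a set \<Rightarrow> ('a list \<Rightarrow> 'a list) set \<Rightarrow> bool" where
  "aut_subgroup X H \<longleftrightarrow> H \<subseteq> {g. tree_aut X g} \<and> id \<in> H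
     \<and> (\<forall>g\<in>H. \<forall>h\<in>H. g \<circ> h \<in> H) \<and> (\<forall>g\<in>H. inv g \<in> H)"

text \<open>The section g_u: g(u w) = g(u) g_u(w); identity outside lists X.\<close>
definition sect :: "'a set \<Rightarrow> ('a list \<Rightarrow> 'a list) \<Rightarrow> 'a list \<Rightarrow> 'a list \<Rightarrow> 'a list" where
  "sect X g u = (\<lambda>w. if w \<in> lists X then drop (length (g u)) (g (u @ w)) else w)"

definition psi :: "'a set \<Rightarrow> 'a list \<Rightarrow> ('a list \<Rightarrow> 'a list) set \<Rightarrow> ('a list \<Rightarrow> 'a list) set" where
  "psi X u H = (\<lambda>h. sect X h u) ` H"

definition leaf_set :: "'a set \<Rightarrow> 'a list set \<Rightarrow> bool" where
  "leaf_set X Y \<longleftrightarrow> finite Y \<and> Y \<subseteq> lists X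
     \<and> (\<forall>y\<in>Y. \<forall>z\<in>Y. prefix y z \<longrightarrow> y = z)"

definition invariant_set :: "('a list \<Rightarrow> 'a list) set \<Rightarrow> 'a list set \<Rightarrow> bool" where
  "invariant_set H Y \<longleftrightarrow> (\<forall>h\<in>H. h ` Y = Y)"

definition independent_family :: "'a set \<Rightarrow> ('i \<Rightarrow> 'a list set) \<Rightarrow> bool" where
  "independent_family X Y \<longleftrightarrow> (\<forall>F. finite F \<longrightarrow> leaf_set X (\<Union>f\<in>F. Y f))"

end

theory Submission
  imports Defs
begin

lemma prefix_len_eq: "prefix xs ys \<Longrightarrow> length xs = length ys \<Longrightarrow> xs = ys"
  by (auto simp: prefix_def)

lemma ta_bij:
  assumes "tree_aut X g" shows "bij g"
proof -
  have b: "bij_betw g (lists X) (lists X)" and o: "\<And>w. w \<notin> lists X \<Longrightarrow> g w = w"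
    using assms unfolding tree_aut_def by auto
  have i: "inj_on g (lists X)" using b by (rule bij_betw_imp_inj_on)
  have s: "g ` lists X = lists X" using b by (rule bij_betw_imp_surj_on)
  have inL: "g x \<in> lists X" if "x \<in> lists X" for x using s that by blast
  have "inj g"
  proof (rule injI)
    fix x y assume e: "g x = g y"
    show "x = y"
    proof (cases "x \<in> lists X")
      case True
      have gy: "g y \<in> lists X" using e inL[OF True] by simp
      have "y \<in> lists X"
      proof (rule ccontr)
        assume "y \<notin> lists X" then show False using o gy by simp
      qed
      then show ?thesis using i True e by (simp add: inj_on_def)
    next
      case False
      then have gx: "g x \<notin> lists X" using o by simp
      then have "y \<notin> lists X" using e inL by auto
      then show ?thesis using o False e by simp
    qed
  qed
  moreover have "surj g"
  proof -
    have "y \<in> range g" for y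
    proof (cases "y \<in> lists X")
      case True then show ?thesis using s by blast
    next
      case False then have "g y = y" using o by simp
      then show ?thesis using rangeI[of g y] by simp
    qed
    then show ?thesis by blast
  qed
  ultimately show ?thesis by (simp add: bij_def)
qed

lemma ta_lists: "tree_aut X g \<Longrightarrow> w \<in> lists X \<Longrightarrow> g w \<in> lists X"
  unfolding tree_aut_def by (elim conjE) (rule bij_betw_apply)

lemma ta_prefix: "tree_aut X g \<Longrightarrow> u \<in> lists X \<Longrightarrow> w \<in> lists X \<Longrightarrow>
   prefix u w \<longleftrightarrow> prefix (g u) (g w)"
  unfolding tree_aut_def by blast

lemma ta_len_ge:
  assumes "tree_aut X g" "w \<in> lists X" shows "length w \<le> length (g w)"
  using assms(2)
proof (induction w rule: rev_induct)
  case Nil then show ?case by simp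
next
  case (snoc x xs)
  have xs: "xs \<in> lists X" using snoc by auto
  have p: "prefix (g xs) (g (xs @ [x]))" using ta_prefix[OF assms(1) xs snoc(2)] by simp
  have ne: "g xs \<noteq> g (xs @ [x])"
  proof
    assume "g xs = g (xs @ [x])"
    then have "xs = xs @ [x]" by (rule injD[OF bij_is_inj[OF ta_bij[OF assms(1)]]])
    then show False by simp
  qed
  have "strict_prefix (g xs) (g (xs @ [x]))" using p ne by (simp add: prefix_order.less_le)
  then have "length (g xs) < length (g (xs @ [x]))" by (rule prefix_length_less)
  then show ?case using snoc xs by simp
qed

lemma H_ta: "aut_subgroup X H \<Longrightarrow> h \<in> H \<Longrightarrow> tree_aut X h"
  unfolding aut_subgroup_def by auto

lemma H_inv: "aut_subgroup X H \<Longrightarrow> h \<in> H \<Longrightarrow> inv h \<in> H"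
  unfolding aut_subgroup_def by auto

lemma H_comp: "aut_subgroup X H \<Longrightarrow> h \<in> H \<Longrightarrow> k \<in> H \<Longrightarrow> h \<circ> k \<in> H"
  unfolding aut_subgroup_def by auto

lemma H_len:
  assumes "aut_subgroup X H" "h \<in> H" "w \<in> lists X" shows "length (h w) = length w"
proof -
  have t: "tree_aut X h" and ti: "tree_aut X (inv h)" using assms H_ta H_inv by blast+
  have "inv h (h w) = w" using ta_bij[OF t] by (simp add: bij_is_inj)
  moreover have "length (h w) \<le> length (inv h (h w))"
    using ta_len_ge[OF ti ta_lists[OF t assms(3)]] .
  ultimately show ?thesis using ta_len_ge[OF t assms(3)] by simp
qed

lemma ta_append:
  assumes "tree_aut X g" "u \<in> lists X" "w \<in> lists X"
  shows "g (u @ w) = g u @ sect X g u w"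
proof -
  have "u @ w \<in> lists X" using assms by simp
  then have "prefix (g u) (g (u @ w))" using ta_prefix[OF assms(1) assms(2), of "u @ w"] by simp
  then obtain z where "g (u @ w) = g u @ z" by (auto simp: prefix_def)
  then show ?thesis using assms(3) by (simp add: sect_def)
qed


lemma psi_append:
  assumes H: "aut_subgroup X H" and v: "v \<in> lists X" and w: "w \<in> lists X"
    and f: "finite (psi X v H)"
  shows "finite (psi X (v @ w) H)"
proof -
  define F where "F = (\<lambda>s::'a list \<Rightarrow> 'a list. \<lambda>z. if z \<in> lists X then drop (length w) (s (w @ z)) else z)"
  have "sect X h (v @ w) = F (sect X h v)" if hH: "h \<in> H" for h
  proof
    fix z show "sect X h (v @ w) z = F (sect X h v) z"
    proof (cases "z \<in> lists X")
      case True
      have l1: "length (h (v @ w)) = length v + length w" using H_len[OF H hH] v w by simp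
      have l2: "length (h v) = length v" using H_len[OF H hH v] .
      show ?thesis using True w l1 l2 by (simp add: sect_def F_def add.commute)
    next
      case False then show ?thesis by (simp add: sect_def F_def)
    qed
  qed
  then have "psi X (v @ w) H \<subseteq> F ` psi X v H" unfolding psi_def by auto
  then show ?thesis using f finite_subset by blast
qed

lemma psi_orbit:
  assumes H: "aut_subgroup X H" and v: "v \<in> lists X" and h: "h \<in> H"
    and f: "finite (psi X v H)"
  shows "finite (psi X (h v) H)"
proof -
  have t: "tree_aut X h" using H_ta[OF H h] .
  have hv: "h v \<in> lists X" using ta_lists[OF t v] .
  define w' where "w' = (\<lambda>z. SOME y. y \<in> lists X \<and> h (v @ y) = h v @ z)"
  have ex: "\<exists>y. y \<in> lists X \<and> h (v @ y) = h v @ z" if z: "z \<in> lists X" for z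
  proof -
    have "h v @ z \<in> lists X" using hv z by simp
    moreover have "h ` lists X = lists X" using t unfolding tree_aut_def
      by (simp add: bij_betw_imp_surj_on)
    ultimately have "h v @ z \<in> h ` lists X" by simp
    then obtain x0 where x0: "h v @ z = h x0" "x0 \<in> lists X" by (rule imageE)
    then have x: "x0 \<in> lists X" "h x0 = h v @ z" by simp_all
    have "prefix v x0" using ta_prefix[OF t v x(1)] x(2) by simp
    then obtain y where "x0 = v @ y" by (auto simp: prefix_def)
    then show ?thesis using x by auto
  qed
  have w'P: "w' z \<in> lists X \<and> h (v @ w' z) = h v @ z" if "z \<in> lists X" for z
    unfolding w'_def using someI_ex[OF ex[OF that]] .
  define F where "F = (\<lambda>s::'a list \<Rightarrow> 'a list. \<lambda>z. if z \<in> lists X then s (w' z) else z)"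
  have eq: "sect X k (h v) = F (sect X (k \<circ> h) v)" if kH: "k \<in> H" for k
  proof
    fix z show "sect X k (h v) z = F (sect X (k \<circ> h) v) z"
    proof (cases "z \<in> lists X")
      case True
      have l1: "length (k (h v)) = length v" using H_len[OF H kH hv] H_len[OF H h v] by simp
      have "k (h v @ z) = k (h (v @ w' z))" using w'P[OF True] by simp
      then show ?thesis using True w'P[OF True] l1 by (simp add: sect_def F_def)
    next
      case False then show ?thesis by (simp add: sect_def F_def)
    qed
  qed
  have "psi X (h v) H \<subseteq> F ` psi X v H"
  proof
    fix s assume "s \<in> psi X (h v) H"
    then obtain k where k: "k \<in> H" "s = sect X k (h v)" unfolding psi_def by auto
    have "sect X (k \<circ> h) v \<in> psi X v H" unfolding psi_def using H_comp[OF H k(1) h] by blast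
    then show "s \<in> F ` psi X v H" using eq[OF k(1)] k(2) by blast
  qed
  then show ?thesis using f finite_subset by blast
qed


lemma prefix_same_len: "prefix (a @ s) (b @ t) \<Longrightarrow> length a = length b \<Longrightarrow> prefix s t"
  by (auto simp: prefix_def append_eq_append_conv)

theorem lemma4p3:
  fixes X :: "'a set" and G H :: "('a list \<Rightarrow> 'a list) set"
  assumes "finite X" and "2 \<le> card X"
    and "aut_subgroup X G" and "aut_subgroup X H" and "H \<subseteq> G"
    and "\<exists>v\<in>lists X. finite (psi X v H)"
  shows "\<forall>M::nat. \<exists>Y :: nat \<Rightarrow> 'a list set.
           independent_family X Y
         \<and> inj Y
         \<and> (\<forall>i. Y i \<noteq> {} \<and> leaf_set X (Y i) \<and> invariant_set H (Y i))
         \<and> (\<forall>i. \<forall>v\<in>Y i. finite (psi X v H))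
         \<and> (\<forall>i. \<forall>x\<in>Y i. M \<le> length x)"
proof (intro allI)
  fix M :: nat
  have HH: "aut_subgroup X H" by fact
  obtain v where v: "v \<in> lists X" "finite (psi X v H)" using assms(6) by blast
  have "X \<noteq> {}" using assms(2) by (metis card.empty not_numeral_le_zero)
  then obtain a where a: "a \<in> X" by blast
  define N where "N = card (psi X v H)"
  define l where "l = Suc N"
  define C where "C = (\<lambda>w. (\<lambda>h. sect X h v w) ` H)"
  have Cfin: "finite (C w) \<and> card (C w) \<le> N" for w
  proof -
    have "C w = (\<lambda>s. s w) ` psi X v H" unfolding C_def psi_def by (simp add: image_image)
    then show ?thesis using v(2) N_def by (simp add: card_image_le)
  qed
  have ex: "\<exists>r. r \<in> lists X \<and> length r = length q + l \<and> prefix q r \<and> r \<notin> C (q @ replicate l a)"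
    if q: "q \<in> lists X" for q
  proof -
    define T where "T = {t. set t \<subseteq> X \<and> length t = l}"
    define W where "W = (\<lambda>t. q @ t) ` T"
    have "card W = card T" unfolding W_def by (simp add: card_image inj_on_def)
    also have "card T = card X ^ l" unfolding T_def by (rule card_lists_length_eq[OF assms(1)])
    finally have cW: "card W = card X ^ l" .
    have "N < 2 ^ N" by (rule less_exp)
    also have "(2::nat) ^ N \<le> 2 ^ l" unfolding l_def by simp
    also have "(2::nat) ^ l \<le> card X ^ l" using assms(2) by (simp add: power_mono)
    finally have "card (C (q @ replicate l a)) < card W" using Cfin[of "q @ replicate l a"] cW by linarith
    then have "\<not> W \<subseteq> C (q @ replicate l a)"
      using card_mono[OF conjunct1[OF Cfin[of "q @ replicate l a"]]] by (meson leD)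
    then obtain r where r: "r \<in> W" "r \<notin> C (q @ replicate l a)" by blast
    then obtain t where t: "set t \<subseteq> X" "length t = l" "r = q @ t" unfolding W_def T_def by auto
    have "r \<in> lists X \<and> length r = length q + l \<and> prefix q r \<and> r \<notin> C (q @ replicate l a)"
      using t q r(2) by auto
    then show ?thesis by blast
  qed
  define stp where "stp = (\<lambda>q. SOME r. r \<in> lists X \<and> length r = length q + l \<and> prefix q r \<and> r \<notin> C (q @ replicate l a))"
  have stpP: "stp q \<in> lists X \<and> length (stp q) = length q + l \<and> prefix q (stp q) \<and> stp q \<notin> C (q @ replicate l a)"
    if "q \<in> lists X" for q
    unfolding stp_def using someI_ex[OF ex[OF that]] .
  define p where "p = rec_nat (replicate M a) (\<lambda>_ q. stp q)"
  have p0: "p 0 = replicate M a" and pS: "p (Suc j) = stp (p j)" for j unfolding p_def by simp_all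
  have pL: "p j \<in> lists X \<and> length (p j) = M + j * l" for j
  proof (induction j)
    case 0 then show ?case using a by (auto simp: p0)
  next
    case (Suc j) then show ?case using stpP[of "p j"] by (simp add: pS)
  qed
  have pP: "prefix (p i) (p j)" if "i \<le> j" for i j
    using that
  proof (induction j)
    case 0 then show ?case by simp
  next
    case (Suc j) show ?case
    proof (cases "i = Suc j")
      case True then show ?thesis by simp
    next
      case False then have "prefix (p i) (p j)" using Suc by simp
      moreover have "prefix (p j) (p (Suc j))" using stpP[of "p j"] pL[of j] pS[of j] by simp
      ultimately show ?thesis by (metis prefix_order.trans)
    qed
  qed
  define w where "w = (\<lambda>j. p j @ replicate l a)"
  define u where "u = (\<lambda>j. v @ w j)"
  have wL: "w j \<in> lists X" "length (w j) = M + Suc j * l" for j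
    using pL[of j] a unfolding w_def by auto
  have uL: "u j \<in> lists X" "length (u j) = length v + (M + Suc j * l)" for j
    using wL[of j] v unfolding u_def by auto
  have key: "\<not> prefix c (w j)" if ij: "i < j" and cC: "c \<in> C (w i)" for i j c
  proof
    assume pc: "prefix c (w j)"
    obtain h where h: "h \<in> H" "c = sect X h v (w i)" using cC unfolding C_def by auto
    have "length c = length (w i)"
    proof -
      have "length (h (v @ w i)) = length v + length (w i)" using H_len[OF HH h(1)] v wL by simp
      moreover have "c = drop (length (h v)) (h (v @ w i))" using h(2) wL(1)[of i] unfolding sect_def by simp
      ultimately show ?thesis using H_len[OF HH h(1) v(1)] by simp
    qed
    then have lc: "length c = length (p (Suc i))" using pL[of "Suc i"] wL(2)[of i] by simp
    have "prefix (p j) (w j)" by (simp add: w_def)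
    then have "prefix (p (Suc i)) (w j)" using pP[of "Suc i" j] ij by (metis Suc_leI prefix_order.trans)
    then have "c = p (Suc i)" using pc lc by (metis prefix_same_cases prefix_len_eq)
    moreover have "p (Suc i) \<notin> C (w i)" using stpP[of "p i"] pL[of i] pS[of i] unfolding w_def by simp
    ultimately show False using cC by simp
  qed
  define Y where "Y = (\<lambda>j. (\<lambda>h. h (u j)) ` H)"
  have idH: "id \<in> H" using HH unfolding aut_subgroup_def by blast
  have uY: "u j \<in> Y j" for j unfolding Y_def by (rule image_eqI[of _ _ id]) (simp_all add: idH)
  have Ysub: "Y j \<subseteq> {x. set x \<subseteq> X \<and> length x = length (u j)}" for j
  proof
    fix x assume "x \<in> Y j"
    then obtain h where h: "h \<in> H" "x = h (u j)" unfolding Y_def by auto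
    have "x \<in> lists X" using ta_lists[OF H_ta[OF HH h(1)] uL(1)] h(2) by simp
    moreover have "length x = length (u j)" using H_len[OF HH h(1) uL(1)] h(2) by simp
    ultimately show "x \<in> {x. set x \<subseteq> X \<and> length x = length (u j)}" by auto
  qed
  have Yfin: "finite (Y j)" for j
    by (rule finite_subset[OF Ysub finite_lists_length_eq[OF assms(1)]])
  have Ylen: "length x = length (u j)" if "x \<in> Y j" for x j using Ysub that by blast
  have Ylists: "Y j \<subseteq> lists X" for j using Ysub by auto
  have anti: "y = z" if yz: "y \<in> Y i" "z \<in> Y j" "prefix y z" for i j y z
  proof -
    obtain h k where hk: "h \<in> H" "k \<in> H" "y = h (u i)" "z = k (u j)" using yz unfolding Y_def by auto
    show ?thesis
    proof (cases "i = j")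
      case True
      have "length y = length z" using Ylen[OF yz(1)] Ylen[OF yz(2)] True by simp
      then show ?thesis using yz(3) prefix_len_eq by blast
    next
      case False
      define g where "g = inv k \<circ> h"
      have gH: "g \<in> H" using H_comp[OF HH H_inv[OF HH hk(2)] hk(1)] g_def by simp
      have tk: "tree_aut X k" using H_ta[OF HH hk(2)] .
      have tik: "tree_aut X (inv k)" using H_ta[OF HH H_inv[OF HH hk(2)]] .
      have ikz: "inv k z = u j" using ta_bij[OF tk] hk(4) by (simp add: bij_is_inj)
      have "y \<in> lists X" "z \<in> lists X" using yz Ylists by auto
      then have "prefix (inv k y) (inv k z)" using ta_prefix[OF tik] yz(3) by blast
      then have pg: "prefix (g (u i)) (u j)" using g_def hk(3) ikz by simp
      have lg: "length (g (u i)) = length (u i)" using H_len[OF HH gH uL(1)] .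
      then have "length (u i) \<le> length (u j)" using prefix_length_le[OF pg] by simp
      then have "Suc i * l \<le> Suc j * l" using uL(2) by simp
      then have "Suc i \<le> Suc j" using mult_le_cancel2[of "Suc i" l "Suc j"] unfolding l_def by blast
      then have "i \<le> j" by simp
      then have ij: "i < j" using False by simp
      have gu: "g (u i) = g v @ sect X g v (w i)" using ta_append[OF H_ta[OF HH gH] v(1) wL(1)] unfolding u_def by simp
      have lgv: "length (g v) = length v" using H_len[OF HH gH v(1)] .
      have "prefix (g v @ sect X g v (w i)) (v @ w j)" using pg gu unfolding u_def by simp
      then have "prefix (sect X g v (w i)) (w j)" using lgv by (rule prefix_same_len)
      moreover have "sect X g v (w i) \<in> C (w i)" unfolding C_def using gH by blast
      ultimately show ?thesis using key ij by blast
    qed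
  qed
  have leaf: "leaf_set X (Y i)" for i unfolding leaf_set_def
    using Yfin[of i] Ylists[of i] anti[of _ i _ i] by blast
  show "\<exists>Y :: nat \<Rightarrow> 'a list set.
           independent_family X Y
         \<and> inj Y
         \<and> (\<forall>i. Y i \<noteq> {} \<and> leaf_set X (Y i) \<and> invariant_set H (Y i))
         \<and> (\<forall>i. \<forall>v\<in>Y i. finite (psi X v H))
         \<and> (\<forall>i. \<forall>x\<in>Y i. M \<le> length x)"
  proof (intro exI[of _ Y] conjI allI ballI)
    show "independent_family X Y" unfolding independent_family_def leaf_set_def
    proof (intro allI impI conjI)
      fix F :: "nat set" assume "finite F"
      then show "finite (\<Union>f\<in>F. Y f)" using Yfin by simp
      show "(\<Union>f\<in>F. Y f) \<subseteq> lists X" using Ylists by blast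
      show "\<forall>y\<in>\<Union>f\<in>F. Y f. \<forall>z\<in>\<Union>f\<in>F. Y f. prefix y z \<longrightarrow> y = z"
      proof (intro ballI impI)
        fix y z assume "y \<in> (\<Union>f\<in>F. Y f)" "z \<in> (\<Union>f\<in>F. Y f)" "prefix y z"
        then obtain i j where "y \<in> Y i" "z \<in> Y j" "prefix y z" by blast
        then show "y = z" by (rule anti)
      qed
    qed
    show "inj Y"
    proof (rule injI)
      fix i j assume "Y i = Y j"
      then have "length (u i) = length (u j)" using uY[of i] Ylen[of "u i" j] by simp
      then have "Suc i * l = Suc j * l" using uL(2) by simp
      then have "Suc i = Suc j" using mult_cancel2[of "Suc i" l "Suc j"] unfolding l_def by blast
      then show "i = j" by simp
    qed
    fix i
    show "Y i \<noteq> {}" using uY by blast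
    show "leaf_set X (Y i)" by (rule leaf)
    show "invariant_set H (Y i)" unfolding invariant_set_def
    proof
      fix h assume h: "h \<in> H"
      show "h ` Y i = Y i"
      proof
        show "h ` Y i \<subseteq> Y i"
        proof
          fix x assume "x \<in> h ` Y i"
          then obtain k where k: "k \<in> H" "x = h (k (u i))" unfolding Y_def by auto
          then have "x = (h \<circ> k) (u i)" by simp
          then show "x \<in> Y i" unfolding Y_def using H_comp[OF HH h k(1)] by blast
        qed
        show "Y i \<subseteq> h ` Y i"
        proof
          fix x assume "x \<in> Y i"
          then obtain k where k: "k \<in> H" "x = k (u i)" unfolding Y_def by auto
          have "h (inv h x) = x" using ta_bij[OF H_ta[OF HH h]] by (simp add: bij_is_surj surj_f_inv_f)
          moreover have "inv h x = (inv h \<circ> k) (u i)" using k by simp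
          moreover have "(inv h \<circ> k) (u i) \<in> Y i" unfolding Y_def using H_comp[OF HH H_inv[OF HH h] k(1)] by blast
          ultimately show "x \<in> h ` Y i" by (metis imageI)
        qed
      qed
    qed
  next
    fix i x assume "x \<in> Y i"
    then obtain h where h: "h \<in> H" "x = h (u i)" unfolding Y_def by auto
    have "finite (psi X (u i) H)" unfolding u_def using psi_append[OF HH v(1) wL(1) v(2)] .
    then show "finite (psi X x H)" using psi_orbit[OF HH uL(1) h(1)] h(2) by simp
  next
    fix i x assume "x \<in> Y i"
    then show "M \<le> length x" using Ylen uL(2) by simp
  qed
qed

end
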